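(* Let $k=\overline{\mathbb Q}$ with the trivial valuation, $G=\operatorname{Spec}k[T]$ the additive group, $G^{\mathrm{an}}=\operatorname{Hom}_k(k[T],\mathbb T)$ with Berkovich's hyperoperation $\odot$, and $H=\{h\in G^{\mathrm{an}}: h(T)<0\}$. Then $H$ is closed under $\odot$, $(H,\odot)$ is a hypergroup, and the map $H\to\mathbb T_{<0}$, $h\mapsto h(T)$, is an isomorphism of hypergroups onto $\mathbb T_{<0}=\{a\in\mathbb T: a<0\}$ with the hyperaddition of $\mathbb T$ (i.e. a bijection $\phi$ with $\phi(f\odot g)=\phi(f)\oplus\phi(g)$).
   Context: $\mathbb T=\mathbb R\cup\{-\infty\}$ is the tropical hyperfield: multiplication is usual addition with $-\infty$ absorbing, hyperaddition $s\oplus t=\max\{s,t\}$ if $s\ne t$, $s\oplus s=\{u\in\mathbb T:u\le s\}$; $\mathbb T_{<0}$ (which contains $-\infty$) is closed under $\oplus$. $\operatorname{Hom}_k(B,\mathbb T)$ is the set of maps $\varphi:B\to\mathbb T$ with $\varphi(0)=-\infty$, $\varphi(1)=0$, $\varphi(xy)=\varphi(x)+\varphi(y)$, $\varphi(x+y)\in\varphi(x)\oplus\varphi(y)$, restricting to the trivial valuation on $k$ (nonzero elements $\mapsto0$). The Hopf algebra $A=k[T]$ has coproduct $\Delta(T)=T\otimes1+1\otimes T$; with $j_1(a)=a\otimes1$, $j_2(a)=1\otimes a$, $g\odot h=\{f\in\operatorname{Hom}_k(A,\mathbb T):\exists\beta\in\operatorname{Hom}_k(A\otimes_kA,\mathbb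 T),\ \beta\circ j_1=g,\ \beta\circ j_2=h,\ f=\beta\circ\Delta\}$. A hypergroup is a set with an associative hyperoperation $*$ having a unique identity $e$ ($e*x=x*e=\{x\}$), unique inverses ($e\in x*x^{-1}\cap x^{-1}*x$), and reversibility ($x\in y*z\Rightarrow y\in x*z^{-1},\ z\in y^{-1}*x$). *)

theory Defs
  imports "HOL-Analysis.Analysis" "HOL-Computational_Algebra.Polynomial"
begin

definition trop :: "ereal set" where
  "trop = {x. x \<noteq> \<infinity>}"

definition trop_neg :: "ereal set" where
  "trop_neg = {x. x < 0}"

definition trop_add :: "ereal \<Rightarrow> ereal \<Rightarrow> ereal set" where
  "trop_add s t = (if s \<noteq> t then {max s t} else {u \<in> trop. u \<le> s})"

definition kbar :: "complex set" where
  "kbar = {x. algebraic x}"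

definition polyA :: "complex poly set" where
  "polyA = {p. \<forall>i. coeff p i \<in> kbar}"

text \<open>k[T] \<otimes>_k k[T] = k[T1,T2], modelled as k[T1][T2]\<close>
definition polyAA :: "complex poly poly set" where
  "polyAA = {P. \<forall>i j. coeff (coeff P i) j \<in> kbar}"

definition j1 :: "complex poly \<Rightarrow> complex poly poly" where
  "j1 a = [:a:]"

definition j2 :: "complex poly \<Rightarrow> complex poly poly" where
  "j2 a = map_poly (\<lambda>c. [:c:]) a"

text \<open>coproduct: Delta(T) = T \<otimes> 1 + 1 \<otimes> T, i.e. p(T) \<mapsto> p(T1 + T2)\<close>
definition Delta :: "complex poly \<Rightarrow> complex poly poly" where
  "Delta p = pcompose (map_poly (\<lambda>c. [:c:]) p) [: [:0, 1:], 1 :]"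

section \<open>Hom_k(B, T) for a k-algebra given by a carrier B and the structure map k \<rightarrow> B\<close>

definition trop_hom :: "'b::comm_ring_1 set \<Rightarrow> (complex \<Rightarrow> 'b) \<Rightarrow> ('b \<Rightarrow> ereal) set" where
  "trop_hom B emb = {\<phi>. \<phi> \<in> B \<rightarrow>\<^sub>E trop \<and>
      \<phi> 0 = -\<infinity> \<and> \<phi> 1 = 0 \<and>
      (\<forall>x\<in>B. \<forall>y\<in>B. \<phi> (x * y) = \<phi> x + \<phi> y) \<and>
      (\<forall>x\<in>B. \<forall>y\<in>B. \<phi> (x + y) \<in> trop_add (\<phi> x) (\<phi> y)) \<and>
      (\<forall>c\<in>kbar. c \<noteq> 0 \<longrightarrow> \<phi> (emb c) = 0)}"

definition Gan :: "(complex poly \<Rightarrow> ereal) set" where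
  "Gan = trop_hom polyA (\<lambda>c. [:c:])"

definition Gan2 :: "(complex poly poly \<Rightarrow> ereal) set" where
  "Gan2 = trop_hom polyAA (\<lambda>c. [:[:c:]:])"

definition berk_op :: "(complex poly \<Rightarrow> ereal) \<Rightarrow> (complex poly \<Rightarrow> ereal) \<Rightarrow> (complex poly \<Rightarrow> ereal) set" where
  "berk_op g h = {f \<in> Gan. \<exists>\<beta>\<in>Gan2.
      (\<forall>a\<in>polyA. \<beta> (j1 a) = g a \<and> \<beta> (j2 a) = h a \<and> f a = \<beta> (Delta a))}"

definition Hset :: "(complex poly \<Rightarrow> ereal) set" where
  "Hset = {h \<in> Gan. h [:0, 1:] < 0}"

definition hyp_identity :: "'a set \<Rightarrow> ('a \<Rightarrow> 'a \<Rightarrow> 'a set) \<Rightarrow> 'a \<Rightarrow> bool" where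
  "hyp_identity S op e \<longleftrightarrow> e \<in> S \<and> (\<forall>x\<in>S. op e x = {x} \<and> op x e = {x})"

definition hypergroup :: "'a set \<Rightarrow> ('a \<Rightarrow> 'a \<Rightarrow> 'a set) \<Rightarrow> bool" where
  "hypergroup S op \<longleftrightarrow>
     (\<forall>x\<in>S. \<forall>y\<in>S. op x y \<subseteq> S) \<and>
     (\<forall>x\<in>S. \<forall>y\<in>S. \<forall>z\<in>S. (\<Union>w\<in>op x y. op w z) = (\<Union>w\<in>op y z. op x w)) \<and>
     (\<exists>!e. hyp_identity S op e) \<and>
     (\<forall>e. hyp_identity S op e \<longrightarrow>
        (\<forall>x\<in>S. \<exists>!x'. x' \<in> S \<and> e \<in> op x x' \<and> e \<in> op x' x) \<and>
        (\<forall>x\<in>S. \<forall>y\<in>S. \<forall>z\<in>S. \<forall>y'\<in>S. \<forall>z'\<in>S.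
            e \<in> op y y' \<and> e \<in> op y' y \<and> e \<in> op z z' \<and> e \<in> op z' z \<longrightarrow>
            x \<in> op y z \<longrightarrow> y \<in> op x z' \<and> z \<in> op y' x))"

definition hypergroup_iso :: "'a set \<Rightarrow> ('a \<Rightarrow> 'a \<Rightarrow> 'a set) \<Rightarrow> 'b set \<Rightarrow> ('b \<Rightarrow> 'b \<Rightarrow> 'b set) \<Rightarrow> ('a \<Rightarrow> 'b) \<Rightarrow> bool" where
  "hypergroup_iso S op S' op' \<phi> \<longleftrightarrow>
     bij_betw \<phi> S S' \<and> (\<forall>f\<in>S. \<forall>g\<in>S. \<phi> ` (op f g) = op' (\<phi> f) (\<phi> g))"

end

theory Submission
  imports Defs "Jordan_Normal_Form.Char_Poly"
begin


definition qspan :: "complex set \<Rightarrow> complex set" where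
  "qspan S = {u. \<exists>c. u = (\<Sum>s\<in>S. of_rat (c s) * s)}"

lemma qspan_elem: assumes "finite S" "s \<in> S" shows "s \<in> qspan S"
proof -
  have "(\<Sum>t\<in>S. of_rat (if t = s then 1 else 0) * t) = (\<Sum>t\<in>S. (if t = s then t else 0))"
    by (rule sum.cong) auto
  also have "\<dots> = s" using assms by simp
  finally show ?thesis unfolding qspan_def by (auto intro!: exI[of _ "\<lambda>t. if t = s then 1 else 0"])
qed

lemma qspan_add: assumes "u \<in> qspan S" "v \<in> qspan S" shows "u + v \<in> qspan S"
proof -
  from assms obtain c d where "u = (\<Sum>s\<in>S. of_rat (c s) * s)" "v = (\<Sum>s\<in>S. of_rat (d s) * s)"
    unfolding qspan_def by auto
  hence "u + v = (\<Sum>s\<in>S. of_rat (c s + d s) * s)"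
    by (simp add: sum.distrib of_rat_add distrib_right)
  thus ?thesis unfolding qspan_def by (intro CollectI exI[of _ "\<lambda>s. c s + d s"])
qed

lemma qspan_zero: "0 \<in> qspan S"
  unfolding qspan_def by (auto intro!: exI[of _ "\<lambda>_. 0"])

lemma qspan_smult: assumes "u \<in> qspan S" shows "of_rat q * u \<in> qspan S"
proof -
  from assms obtain c where "u = (\<Sum>s\<in>S. of_rat (c s) * s)"
    unfolding qspan_def by auto
  hence "of_rat q * u = (\<Sum>s\<in>S. of_rat (q * c s) * s)"
    by (simp add: sum_distrib_left of_rat_mult mult.assoc)
  thus ?thesis unfolding qspan_def by (intro CollectI exI[of _ "\<lambda>s. q * c s"])
qed

lemma qspan_sum: assumes "finite I" "\<And>i. i \<in> I \<Longrightarrow> f i \<in> qspan S" shows "sum f I \<in> qspan S"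
  using assms by (induction I rule: finite_induct) (auto intro: qspan_zero qspan_add)

lemma qspan_mult: assumes "finite S" "\<And>s. s \<in> S \<Longrightarrow> x * s \<in> qspan S" "u \<in> qspan S"
  shows "x * u \<in> qspan S"
proof -
  from assms obtain c where "u = (\<Sum>s\<in>S. of_rat (c s) * s)"
    unfolding qspan_def by auto
  hence "x * u = (\<Sum>s\<in>S. of_rat (c s) * (x * s))"
    by (simp add: sum_distrib_left algebra_simps)
  also have "\<dots> \<in> qspan S" using assms by (auto intro!: qspan_sum qspan_smult)
  finally show ?thesis .
qed

lemma algebraic_from_qspan:
  assumes fin: "finite S" and nz: "s0 \<in> S" "s0 \<noteq> 0" and cl: "\<And>s. s \<in> S \<Longrightarrow> z * s \<in> qspan S"
  shows "algebraic z"
proof -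
  obtain L where L: "distinct L" "set L = S" using finite_distinct_list[OF fin] by blast
  define N where "N = length L"
  have "\<forall>s\<in>S. \<exists>c. z * s = (\<Sum>t\<in>S. of_rat (c t) * t)" using cl unfolding qspan_def by blast
  then obtain c where c: "\<And>s. s \<in> S \<Longrightarrow> z * s = (\<Sum>t\<in>S. of_rat (c s t) * t)" by metis
  define A :: "rat mat" where "A = mat N N (\<lambda>(k,l). c (L!k) (L!l))"
  define w where "w = vec N (\<lambda>k. L!k)"
  have A: "A \<in> carrier_mat N N" unfolding A_def by simp
  have bij: "bij_betw ((!) L) {0..<N} S" using bij_betw_nth[OF L(1)] L(2) N_def
    by (simp add: atLeast0LessThan)
  have ev: "eigenvector (map_mat of_rat A) w z"
    unfolding eigenvector_def
  proof (intro conjI)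
    show "w \<in> carrier_vec (dim_row (map_mat of_rat A))" using A unfolding w_def by simp
    from nz L obtain k where k: "k < N" "L!k = s0" unfolding N_def by (metis in_set_conv_nth)
    show "w \<noteq> 0\<^sub>v (dim_row (map_mat of_rat A))"
    proof
      assume "w = 0\<^sub>v (dim_row (map_mat of_rat A))"
      hence "w $ k = 0" using k A by simp
      thus False using k nz unfolding w_def by simp
    qed
    show "map_mat of_rat A *\<^sub>v w = z \<cdot>\<^sub>v w"
    proof (rule eq_vecI)
      fix k assume "k < dim_vec (z \<cdot>\<^sub>v w)"
      hence k: "k < N" unfolding w_def by simp
      have "L!k \<in> S" using k L N_def by auto
      have "(map_mat of_rat A *\<^sub>v w) $ k = (\<Sum>l\<in>{0..<N}. of_rat (c (L!k) (L!l)) * L!l)"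
        using k A by (simp add: scalar_prod_def w_def A_def)
      also have "\<dots> = (\<Sum>t\<in>S. of_rat (c (L!k) t) * t)"
        by (rule sum.reindex_bij_betw[OF bij, of "\<lambda>t. of_rat (c (L!k) t) * t"])
      also have "\<dots> = z * L!k" using c[OF \<open>L!k \<in> S\<close>] by simp
      finally show "(map_mat of_rat A *\<^sub>v w) $ k = (z \<cdot>\<^sub>v w) $ k" using k by (simp add: w_def)
    qed (simp add: w_def A_def)
  qed
  have MA: "map_mat of_rat A \<in> carrier_mat N N" using A by simp
  have "poly (char_poly (map_mat of_rat A)) z = 0"
    using ev eigenvalue_root_char_poly[OF MA] unfolding eigenvalue_def by blast
  moreover have "char_poly (map_mat (of_rat::rat\<Rightarrow>complex) A) = map_poly of_rat (char_poly A)"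
    by (rule of_rat_hom.char_poly_hom[OF A])
  ultimately have root: "poly (map_poly (of_rat::rat\<Rightarrow>complex) (char_poly A)) z = 0"
    by simp
  have "coeff (map_poly (of_rat :: rat \<Rightarrow> complex) (char_poly A)) N = 1"
    using degree_monic_char_poly[OF A] by (simp add: coeff_map_poly)
  hence "map_poly (of_rat :: rat \<Rightarrow> complex) (char_poly A) \<noteq> 0" by auto
  moreover have "\<forall>i. coeff (map_poly (of_rat :: rat \<Rightarrow> complex) (char_poly A)) i \<in> \<rat>"
    by (simp add: coeff_map_poly)
  ultimately show ?thesis using root algebraic_altdef by blast
qed

lemma algebraic_monic:
  assumes "algebraic (x::complex)"
  shows "\<exists>m c. m \<ge> 1 \<and> x ^ m = (\<Sum>i<m. of_rat (c i) * x ^ i)"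
proof -
  obtain p where p: "\<forall>i. coeff p i \<in> \<rat>" "p \<noteq> 0" "poly p x = 0" using assms algebraic_altdef by blast
  define m where "m = degree p"
  have "\<forall>i. \<exists>q. coeff p i = of_rat q" using p(1) by (metis Rats_cases)
  then obtain d where d: "\<And>i. coeff p i = of_rat (d i)" by metis
  have lc: "d m \<noteq> 0" using p(2) d[of m] unfolding m_def by (metis leading_coeff_0_iff of_rat_0)
  have m1: "m \<ge> 1"
  proof (rule ccontr)
    assume "\<not> m \<ge> 1" hence "m = 0" by simp
    hence "poly p x = coeff p 0" using poly_altdef[of p x] by (simp add: m_def[symmetric])
    thus False using p d[of 0] lc \<open>m = 0\<close> by simp
  qed
  have "0 = (\<Sum>i\<le>m. coeff p i * x ^ i)" using p(3) unfolding m_def poly_altdef by simp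
  also have "\<dots> = (\<Sum>i<m. coeff p i * x ^ i) + coeff p m * x ^ m"
    by (simp add: lessThan_Suc_atMost[symmetric])
  finally have eq: "of_rat (d m) * x ^ m = - (\<Sum>i<m. of_rat (d i) * x ^ i)" by (simp add: d eq_neg_iff_add_eq_0 add.commute)
  have xm: "x ^ m = (\<Sum>i<m. of_rat (- d i / d m) * x ^ i)"
  proof -
    have "x ^ m = inverse (of_rat (d m)) * (of_rat (d m) * x ^ m)" using lc by simp
    also have "\<dots> = (\<Sum>i<m. of_rat (- d i / d m) * x ^ i)"
      unfolding eq by (simp add: sum_distrib_left of_rat_divide of_rat_minus field_simps sum_negf)
    finally show ?thesis .
  qed
  show ?thesis apply (rule exI[of _ m], rule exI[of _ "\<lambda>i. - d i / d m"]) using m1 xm by simp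
qed

lemma algebraic_add_mult:
  assumes "algebraic (x::complex)" "algebraic y"
  shows "algebraic (x + y) \<and> algebraic (x * y)"
proof -
  obtain m c where mc: "m \<ge> 1" "x ^ m = (\<Sum>i<m. of_rat (c i) * x ^ i)" using algebraic_monic[OF assms(1)] by blast
  obtain n d where nd: "n \<ge> 1" "y ^ n = (\<Sum>i<n. of_rat (d i) * y ^ i)" using algebraic_monic[OF assms(2)] by blast
  define S where "S = (\<lambda>(i,j). x ^ i * y ^ j) ` ({..<m} \<times> {..<n})"
  have fin: "finite S" unfolding S_def by simp
  have one: "1 \<in> S" unfolding S_def using mc nd by (auto intro!: image_eqI[of _ _ "(0,0)"])
  have xS: "x * s \<in> qspan S" if "s \<in> S" for s
  proof -
    from that obtain i j where ij: "i < m" "j < n" "s = x ^ i * y ^ j" unfolding S_def by auto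
    show ?thesis
    proof (cases "Suc i < m")
      case True
      hence "x * s \<in> S" unfolding S_def using ij by (auto intro!: image_eqI[of _ _ "(Suc i, j)"])
      thus ?thesis using qspan_elem fin by blast
    next
      case False
      hence "Suc i = m" using ij by simp
      have "x * s = x ^ Suc i * y ^ j" using ij by (simp add: mult.assoc)
      hence "x * s = x ^ m * y ^ j" using \<open>Suc i = m\<close> by simp
      also have "\<dots> = (\<Sum>i'<m. of_rat (c i') * (x ^ i' * y ^ j))" unfolding mc(2)
        by (simp add: sum_distrib_right mult.assoc)
      also have "\<dots> \<in> qspan S"
      proof (rule qspan_sum, simp)
        fix i' assume "i' \<in> {..<m}"
        hence "x ^ i' * y ^ j \<in> S" unfolding S_def using ij by (auto intro!: image_eqI[of _ _ "(i', j)"])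
        thus "of_rat (c i') * (x ^ i' * y ^ j) \<in> qspan S" using qspan_elem fin qspan_smult by blast
      qed
      finally show ?thesis .
    qed
  qed
  have yS: "y * s \<in> qspan S" if "s \<in> S" for s
  proof -
    from that obtain i j where ij: "i < m" "j < n" "s = x ^ i * y ^ j" unfolding S_def by auto
    show ?thesis
    proof (cases "Suc j < n")
      case True
      hence "y * s \<in> S" unfolding S_def using ij by (auto intro!: image_eqI[of _ _ "(i, Suc j)"])
      thus ?thesis using qspan_elem fin by blast
    next
      case False
      hence "Suc j = n" using ij by simp
      have "y * s = x ^ i * y ^ Suc j" using ij by (simp add: algebra_simps)
      hence "y * s = x ^ i * y ^ n" using \<open>Suc j = n\<close> by simp
      also have "\<dots> = (\<Sum>j'<n. of_rat (d j') * (x ^ i * y ^ j'))" unfolding nd(2)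
        by (simp add: sum_distrib_left algebra_simps)
      also have "\<dots> \<in> qspan S"
      proof (rule qspan_sum, simp)
        fix j' assume "j' \<in> {..<n}"
        hence "x ^ i * y ^ j' \<in> S" unfolding S_def using ij by (auto intro!: image_eqI[of _ _ "(i, j')"])
        thus "of_rat (d j') * (x ^ i * y ^ j') \<in> qspan S" using qspan_elem fin qspan_smult by blast
      qed
      finally show ?thesis .
    qed
  qed
  have "algebraic (x + y)"
    by (rule algebraic_from_qspan[OF fin one]) (auto simp: distrib_right intro: qspan_add xS yS)
  moreover have "algebraic (x * y)"
    by (rule algebraic_from_qspan[OF fin one]) (auto simp: mult.assoc intro: qspan_mult[OF fin] xS yS)
  ultimately show ?thesis by blast
qed



lemma trop_add_iff:
  assumes "a \<noteq> \<infinity>" "b \<noteq> \<infinity>"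
  shows "u \<in> trop_add a b \<longleftrightarrow> u \<noteq> \<infinity> \<and> u \<le> max a b \<and> (a \<noteq> b \<longrightarrow> u = max a b)"
  using assms unfolding trop_add_def trop_def by (auto simp: max_def)

lemma ereal_add_cancel_less: "a + ereal c < b + ereal c \<Longrightarrow> a < (b::ereal)"
  by (cases a; cases b) auto

definition tv :: "('a::comm_ring_1 \<Rightarrow> ereal) \<Rightarrow> bool" where
  "tv v \<longleftrightarrow> v 0 = -\<infinity> \<and> v 1 = 0 \<and> (\<forall>x y. v (x*y) = v x + v y) \<and>
     (\<forall>x y. v (x+y) \<le> max (v x) (v y) \<and> (v x \<noteq> v y \<longrightarrow> v (x+y) = max (v x) (v y))) \<and>
     (\<forall>x. v x \<noteq> \<infinity>)"

context
  fixes v :: "'a::comm_ring_1 \<Rightarrow> ereal"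
  assumes v: "tv v"
begin

lemma tv_0: "v 0 = -\<infinity>" and tv_1: "v 1 = 0" and tv_mult: "v (x*y) = v x + v y"
  and tv_add_le: "v (x+y) \<le> max (v x) (v y)"
  and tv_add_eq: "v x \<noteq> v y \<Longrightarrow> v (x+y) = max (v x) (v y)"
  and tv_fin: "v x \<noteq> \<infinity>"
  using v unfolding tv_def by auto

lemma tv_trop_add: "v (x+y) \<in> trop_add (v x) (v y)"
  using trop_add_iff tv_add_le tv_add_eq tv_fin by metis

lemma tv_neg1: "v (-1) = 0"
proof -
  have "v (-1) + v (-1) = 0" using tv_mult[of "-1" "-1"] tv_1 by simp
  thus ?thesis using tv_fin[of "-1"] by (cases "v (-1)") auto
qed

lemma tv_uminus: "v (- x) = v x"
  using tv_mult[of "-1" x] tv_neg1 by simp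

lemma tv_sum_le:
  assumes "finite S" "\<And>i. i \<in> S \<Longrightarrow> v (f i) + ereal c \<le> M"
  shows "v (sum f S) + ereal c \<le> M"
  using assms
proof (induction S rule: finite_induct)
  case empty thus ?case by (simp add: tv_0)
next
  case (insert i S)
  have "v (f i + sum f S) \<le> max (v (f i)) (v (sum f S))" by (rule tv_add_le)
  hence "v (f i + sum f S) + ereal c \<le> max (v (f i)) (v (sum f S)) + ereal c" by (rule add_right_mono)
  also have "\<dots> \<le> M" using insert by (auto simp: max_def)
  finally show ?case using insert by simp
qed

lemma tv_sum_less:
  assumes "finite S" "\<And>i. i \<in> S \<Longrightarrow> v (f i) + ereal c < M" "-\<infinity> < M"
  shows "v (sum f S) + ereal c < M"
  using assms
proof (induction S rule: finite_induct)
  case empty thus ?case by (simp add: tv_0)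
next
  case (insert i S)
  have "v (f i + sum f S) \<le> max (v (f i)) (v (sum f S))" by (rule tv_add_le)
  hence "v (f i + sum f S) + ereal c \<le> max (v (f i)) (v (sum f S)) + ereal c" by (rule add_right_mono)
  also have "\<dots> < M" using insert by (auto simp: max_def)
  finally show ?case using insert by simp
qed


lemma tv_sum_dom:
  assumes "finite S" "i0 \<in> S" "\<And>i. i \<in> S - {i0} \<Longrightarrow> v (f i) + ereal c < v (f i0) + ereal c"
  shows "v (sum f S) = v (f i0)"
proof (cases "S - {i0} = {}")
  case True
  hence "S = {i0}" using assms by auto
  thus ?thesis by simp
next
  case False
  then obtain i where "i \<in> S - {i0}" by auto
  hence lt0: "v (f i) + ereal c < v (f i0) + ereal c" using assms(3) by blast
  have ninf: "-\<infinity> < v (f i0) + ereal c" by (rule le_less_trans[OF _ lt0]) simp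
  have "v (sum f (S - {i0})) + ereal c < v (f i0) + ereal c"
    using assms(1,3) ninf by (intro tv_sum_less) auto
  hence lt: "v (sum f (S - {i0})) < v (f i0)" by (rule ereal_add_cancel_less)
  have "sum f S = f i0 + sum f (S - {i0})" using assms by (simp add: sum.remove)
  hence "v (sum f S) = max (v (f i0)) (v (sum f (S - {i0})))" using lt tv_add_eq by simp
  thus ?thesis using lt by simp
qed

end


lemma ereal_add_less1: "a < A \<Longrightarrow> b \<le> B \<Longrightarrow> B \<noteq> \<infinity> \<Longrightarrow> B \<noteq> -\<infinity> \<Longrightarrow> A \<noteq> \<infinity> \<Longrightarrow> a + b < A + (B::ereal)"
  by (cases a; cases b; cases A; cases B) auto

lemma ereal_max_add: "max a b + ereal c = max (a + ereal c) (b + ereal c)"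
  by (cases a; cases b) (auto simp: max_def)

lemma tv_comp:
  assumes "tv v" "h 0 = 0" "h 1 = 1" "\<And>x y. h (x*y) = h x * h y" "\<And>x y. h (x+y) = h x + h y"
  shows "tv (\<lambda>x. v (h x))"
  using assms unfolding tv_def by auto

definition triv :: "'a::idom \<Rightarrow> ereal" where
  "triv c = (if c = 0 then -\<infinity> else 0)"

lemma tv_triv: "tv triv"
  unfolding tv_def triv_def by (auto simp: max_def)

definition gw :: "('a::comm_ring_1 \<Rightarrow> ereal) \<Rightarrow> ereal \<Rightarrow> 'a poly \<Rightarrow> nat \<Rightarrow> ereal" where
  "gw v b P j = v (coeff P j) + ereal (real j) * b"

definition gauss :: "('a::comm_ring_1 \<Rightarrow> ereal) \<Rightarrow> ereal \<Rightarrow> 'a poly \<Rightarrow> ereal" where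
  "gauss v b P = (SUP j. gw v b P j)"

lemma gauss_ge: "gw v b P j \<le> gauss v b P"
  unfolding gauss_def by (rule SUP_upper) simp

lemma gauss_le: "(\<And>j. gw v b P j \<le> M) \<Longrightarrow> gauss v b P \<le> M"
  unfolding gauss_def by (rule SUP_least)

context
  fixes v :: "'a::comm_ring_1 \<Rightarrow> ereal"
  assumes v: "tv v"
begin

lemma gw_fin: "gw v (ereal \<beta>) P j = v (coeff P j) + ereal (real j * \<beta>)"
  by (simp add: gw_def)

lemma gw_high: "degree P < j \<Longrightarrow> gw v (ereal \<beta>) P j = -\<infinity>"
  by (simp add: gw_fin coeff_eq_0 tv_0[OF v])

lemma gw_ne_inf: "gw v (ereal \<beta>) P j \<noteq> \<infinity>"
  using tv_fin[OF v, of "coeff P j"] by (simp add: gw_fin)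

lemma gauss_attained: "\<exists>j\<le>degree P. gauss v (ereal \<beta>) P = gw v (ereal \<beta>) P j"
proof -
  let ?g = "gw v (ereal \<beta>) P"
  define M where "M = Max (?g ` {..degree P})"
  have M_in: "M \<in> ?g ` {..degree P}" unfolding M_def by (rule Max_in) auto
  have le: "?g j \<le> M" for j
  proof (cases "j \<le> degree P")
    case True thus ?thesis unfolding M_def by (intro Max_ge) auto
  next
    case False thus ?thesis by (simp add: gw_high)
  qed
  from M_in obtain j0 where j0: "j0 \<le> degree P" "M = ?g j0" by auto
  have "gauss v (ereal \<beta>) P = M"
  proof (rule antisym)
    show "gauss v (ereal \<beta>) P \<le> M" by (rule gauss_le, rule le)
    show "M \<le> gauss v (ereal \<beta>) P" using j0 gauss_ge by metis
  qed
  thus ?thesis using j0 by blast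
qed

lemma gauss_fin_ne_inf: "gauss v (ereal \<beta>) P \<noteq> \<infinity>"
  using gauss_attained[of P \<beta>] gw_ne_inf by metis

lemma gw_split:
  assumes "i \<le> n"
  shows "v (coeff P i * coeff Q (n - i)) + ereal (real n * \<beta>) = gw v (ereal \<beta>) P i + gw v (ereal \<beta>) Q (n - i)"
proof -
  have "real n * \<beta> = real i * \<beta> + real (n - i) * \<beta>" using assms by (simp add: of_nat_diff algebra_simps)
  thus ?thesis by (simp add: gw_fin tv_mult[OF v] add_ac)
qed

lemma gauss_mult_fin: "gauss v (ereal \<beta>) (P * Q) = gauss v (ereal \<beta>) P + gauss v (ereal \<beta>) Q"
proof (rule antisym)
  let ?g = "gauss v (ereal \<beta>)" and ?w = "gw v (ereal \<beta>)"
  show "?g (P * Q) \<le> ?g P + ?g Q"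
  proof (rule gauss_le)
    fix n
    have "v (coeff (P*Q) n) + ereal (real n * \<beta>) \<le> ?g P + ?g Q"
      unfolding coeff_mult
    proof (rule tv_sum_le[OF v], simp)
      fix i assume "i \<in> {..n}"
      hence "v (coeff P i * coeff Q (n - i)) + ereal (real n * \<beta>) = ?w P i + ?w Q (n - i)"
        by (intro gw_split) auto
      also have "\<dots> \<le> ?g P + ?g Q" by (intro add_mono gauss_ge)
      finally show "v (coeff P i * coeff Q (n - i)) + ereal (real n * \<beta>) \<le> ?g P + ?g Q" .
    qed
    thus "?w (P * Q) n \<le> ?g P + ?g Q" by (simp add: gw_fin)
  qed
  show "?g P + ?g Q \<le> ?g (P * Q)"
  proof (cases "?g P = -\<infinity> \<or> ?g Q = -\<infinity>")
    case True
    thus ?thesis using gauss_fin_ne_inf[of \<beta> P] gauss_fin_ne_inf[of \<beta> Q]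
      by (cases "?g Q"; cases "?g P") auto
  next
    case False
    hence finP: "?g P \<noteq> -\<infinity>" "?g P \<noteq> \<infinity>" and finQ: "?g Q \<noteq> -\<infinity>" "?g Q \<noteq> \<infinity>"
      using gauss_fin_ne_inf by auto
    have exP: "\<exists>j. ?w P j = ?g P" using gauss_attained[of P \<beta>] by metis
    have exQ: "\<exists>j. ?w Q j = ?g Q" using gauss_attained[of Q \<beta>] by metis
    define j0 where "j0 = (LEAST j. ?w P j = ?g P)"
    define k0 where "k0 = (LEAST j. ?w Q j = ?g Q)"
    have j0: "?w P j0 = ?g P" unfolding j0_def by (rule LeastI_ex[OF exP])
    have k0: "?w Q k0 = ?g Q" unfolding k0_def by (rule LeastI_ex[OF exQ])
    have ltP: "?w P i < ?g P" if "i < j0" for i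
    proof -
      have "?w P i \<noteq> ?g P" using not_less_Least[OF that[unfolded j0_def]] unfolding j0_def by blast
      thus ?thesis using gauss_ge[of v "ereal \<beta>" P i] by simp
    qed
    have ltQ: "?w Q i < ?g Q" if "i < k0" for i
    proof -
      have "?w Q i \<noteq> ?g Q" using not_less_Least[OF that[unfolded k0_def]] unfolding k0_def by blast
      thus ?thesis using gauss_ge[of v "ereal \<beta>" Q i] by simp
    qed
    define n where "n = j0 + k0"
    let ?f = "\<lambda>i. coeff P i * coeff Q (n - i)"
    have "v (coeff (P*Q) n) = v (?f j0)"
      unfolding coeff_mult
    proof (rule tv_sum_dom[OF v, where c = "real n * \<beta>"])
      show "finite {..n}" by simp
      show "j0 \<in> {..n}" unfolding n_def by simp
      fix i assume i: "i \<in> {..n} - {j0}"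
      have eq0: "v (?f j0) + ereal (real n * \<beta>) = ?g P + ?g Q"
        using gw_split[of j0 n P Q \<beta>] j0 k0 unfolding n_def by simp
      have eqi: "v (?f i) + ereal (real n * \<beta>) = ?w P i + ?w Q (n - i)"
        using gw_split[of i n P Q \<beta>] i by simp
      show "v (?f i) + ereal (real n * \<beta>) < v (?f j0) + ereal (real n * \<beta>)"
        unfolding eq0 eqi
      proof (cases "i < j0")
        case True
        thus "?w P i + ?w Q (n - i) < ?g P + ?g Q"
          using ltP[OF True] gauss_ge[of v "ereal \<beta>" Q "n-i"] finP finQ by (intro ereal_add_less1) auto
      next
        case False
        hence "n - i < k0" using i unfolding n_def by auto
        hence "?w Q (n - i) + ?w P i < ?g Q + ?g P"
          using ltQ gauss_ge[of v "ereal \<beta>" P i] finP finQ by (intro ereal_add_less1) auto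
        thus "?w P i + ?w Q (n - i) < ?g P + ?g Q" by (simp add: add.commute)
      qed
    qed
    hence "?w (P*Q) n = v (?f j0) + ereal (real n * \<beta>)" by (simp add: gw_fin)
    also have "\<dots> = ?g P + ?g Q"
      using gw_split[of j0 n P Q \<beta>] j0 k0 unfolding n_def by simp
    finally show ?thesis using gauss_ge[of v "ereal \<beta>" "P*Q" n] by simp
  qed
qed

lemma gauss_add_le_fin: "gauss v (ereal \<beta>) (P + Q) \<le> max (gauss v (ereal \<beta>) P) (gauss v (ereal \<beta>) Q)"
proof (rule gauss_le)
  fix j
  have "v (coeff P j + coeff Q j) \<le> max (v (coeff P j)) (v (coeff Q j))" by (rule tv_add_le[OF v])
  hence "v (coeff P j + coeff Q j) + ereal (real j * \<beta>) \<le> max (v (coeff P j)) (v (coeff Q j)) + ereal (real j * \<beta>)"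
    by (rule add_right_mono)
  also have "\<dots> = max (gw v (ereal \<beta>) P j) (gw v (ereal \<beta>) Q j)" by (simp add: gw_fin ereal_max_add)
  also have "\<dots> \<le> max (gauss v (ereal \<beta>) P) (gauss v (ereal \<beta>) Q)" by (intro max.mono gauss_ge)
  finally show "gw v (ereal \<beta>) (P + Q) j \<le> max (gauss v (ereal \<beta>) P) (gauss v (ereal \<beta>) Q)"
    by (simp add: gw_fin)
qed

lemma gauss_add_gt_fin:
  assumes "gauss v (ereal \<beta>) Q < gauss v (ereal \<beta>) P"
  shows "gauss v (ereal \<beta>) (P + Q) = gauss v (ereal \<beta>) P"
proof (rule antisym)
  show "gauss v (ereal \<beta>) (P + Q) \<le> gauss v (ereal \<beta>) P"
    using gauss_add_le_fin[of \<beta> P Q] assms by simp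
  obtain j where j: "gauss v (ereal \<beta>) P = gw v (ereal \<beta>) P j" using gauss_attained by blast
  have "gw v (ereal \<beta>) Q j < gw v (ereal \<beta>) P j" using gauss_ge[of v "ereal \<beta>" Q j] assms j by simp
  hence "v (coeff Q j) < v (coeff P j)"
    using ereal_add_cancel_less[where a="v (coeff Q j)" and c="real j * \<beta>" and b="v (coeff P j)"] by (simp add: gw_fin)
  hence "v (coeff P j + coeff Q j) = v (coeff P j)" using tv_add_eq[OF v, of "coeff P j" "coeff Q j"] by simp
  hence "gw v (ereal \<beta>) (P + Q) j = gauss v (ereal \<beta>) P" using j by (simp add: gw_fin)
  thus "gauss v (ereal \<beta>) P \<le> gauss v (ereal \<beta>) (P + Q)" using gauss_ge by metis
qed

lemma gauss_zero: "b \<noteq> \<infinity> \<Longrightarrow> gauss v b 0 = -\<infinity>"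
proof -
  assume b: "b \<noteq> \<infinity>"
  have "gauss v b 0 \<le> -\<infinity>"
  proof (rule gauss_le)
    fix j show "gw v b 0 j \<le> -\<infinity>" using b by (cases b) (auto simp: gw_def tv_0[OF v])
  qed
  thus ?thesis by simp
qed

lemma gauss_const_fin: "gauss v (ereal \<beta>) [:c:] = v c"
proof -
  obtain j where "j \<le> degree [:c:]" "gauss v (ereal \<beta>) [:c:] = gw v (ereal \<beta>) [:c:] j"
    using gauss_attained by blast
  thus ?thesis by (simp add: gw_fin)
qed

lemma gauss_minf: "gauss v (-\<infinity>) P = v (coeff P 0)"
proof (rule antisym)
  show "gauss v (-\<infinity>) P \<le> v (coeff P 0)"
  proof (rule gauss_le)
    fix j show "gw v (-\<infinity>) P j \<le> v (coeff P 0)"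
      using tv_fin[OF v, of "coeff P j"] by (cases "j = 0"; cases "v (coeff P j)") (auto simp: gw_def)
  qed
  show "v (coeff P 0) \<le> gauss v (-\<infinity>) P" using gauss_ge[of v "-\<infinity>" P 0] by (simp add: gw_def)
qed

lemma tv_gauss: assumes "b \<noteq> \<infinity>" shows "tv (gauss v b)"
proof (cases b)
  case (real \<beta>)
  show ?thesis unfolding tv_def real
  proof (intro conjI allI impI)
    show "gauss v (ereal \<beta>) 0 = - \<infinity>" by (rule gauss_zero) simp
    show "gauss v (ereal \<beta>) 1 = 0" using gauss_const_fin[of \<beta> 1] tv_1[OF v] by (simp add: one_pCons)
    fix x y
    show "gauss v (ereal \<beta>) (x * y) = gauss v (ereal \<beta>) x + gauss v (ereal \<beta>) y" by (rule gauss_mult_fin)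
    show "gauss v (ereal \<beta>) (x + y) \<le> max (gauss v (ereal \<beta>) x) (gauss v (ereal \<beta>) y)" by (rule gauss_add_le_fin)
    show "gauss v (ereal \<beta>) x \<noteq> \<infinity>" by (rule gauss_fin_ne_inf)
  next
    fix x y assume "gauss v (ereal \<beta>) x \<noteq> gauss v (ereal \<beta>) y"
    thus "gauss v (ereal \<beta>) (x + y) = max (gauss v (ereal \<beta>) x) (gauss v (ereal \<beta>) y)"
      using gauss_add_gt_fin[of \<beta> y x] gauss_add_gt_fin[of \<beta> x y]
      by (cases "gauss v (ereal \<beta>) x < gauss v (ereal \<beta>) y") (auto simp: add.commute max_def)
  qed
next
  case PInf thus ?thesis using assms by simp
next
  case MInf
  have "tv (\<lambda>P. v (coeff P 0))"
    by (rule tv_comp[OF v]) (auto simp: coeff_mult_0)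
  thus ?thesis unfolding MInf by (simp add: gauss_minf[abs_def])
qed

lemma gauss_const: "b \<noteq> \<infinity> \<Longrightarrow> gauss v b [:c:] = v c"
  by (cases b) (auto simp: gauss_const_fin gauss_minf)

lemma gauss_lin: assumes "b \<noteq> \<infinity>" shows "gauss v b [:x, 1:] = max (v x) b"
proof (cases b)
  case (real \<beta>)
  show ?thesis unfolding real
  proof (rule antisym)
    show "gauss v (ereal \<beta>) [:x, 1:] \<le> max (v x) (ereal \<beta>)"
    proof (rule gauss_le)
      fix j show "gw v (ereal \<beta>) [:x, 1:] j \<le> max (v x) (ereal \<beta>)"
      proof (cases j)
        case 0 thus ?thesis by (simp add: gw_fin)
      next
        case (Suc k) thus ?thesis by (cases k) (auto simp: gw_fin tv_1[OF v] tv_0[OF v])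
      qed
    qed
    have "v x \<le> gauss v (ereal \<beta>) [:x, 1:]" using gauss_ge[of v "ereal \<beta>" "[:x,1:]" 0] by (simp add: gw_fin)
    moreover have "ereal \<beta> \<le> gauss v (ereal \<beta>) [:x, 1:]" using gauss_ge[of v "ereal \<beta>" "[:x,1:]" 1] by (simp add: gw_fin tv_1[OF v])
    ultimately show "max (v x) (ereal \<beta>) \<le> gauss v (ereal \<beta>) [:x, 1:]" by simp
  qed
next
  case PInf thus ?thesis using assms by simp
next
  case MInf thus ?thesis by (simp add: gauss_minf)
qed

end



lemma kbar_add: "x \<in> kbar \<Longrightarrow> y \<in> kbar \<Longrightarrow> x + y \<in> kbar"
  and kbar_mult: "x \<in> kbar \<Longrightarrow> y \<in> kbar \<Longrightarrow> x * y \<in> kbar"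
  unfolding kbar_def using algebraic_add_mult by auto

lemma kbar_0: "0 \<in> kbar" and kbar_1: "1 \<in> kbar"
  unfolding kbar_def by (auto intro: rat_imp_algebraic)

lemma kbar_uminus: "x \<in> kbar \<Longrightarrow> - x \<in> kbar"
  unfolding kbar_def by auto

lemma kbar_sum: "finite I \<Longrightarrow> (\<And>i. i \<in> I \<Longrightarrow> f i \<in> kbar) \<Longrightarrow> sum f I \<in> kbar"
  by (induction I rule: finite_induct) (auto intro: kbar_0 kbar_add)

lemma polyA_add: "p \<in> polyA \<Longrightarrow> q \<in> polyA \<Longrightarrow> p + q \<in> polyA"
  unfolding polyA_def by (auto intro: kbar_add)

lemma polyA_mult: "p \<in> polyA \<Longrightarrow> q \<in> polyA \<Longrightarrow> p * q \<in> polyA"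
  unfolding polyA_def by (auto simp: coeff_mult intro!: kbar_sum kbar_mult)

lemma polyA_const: "c \<in> kbar \<Longrightarrow> [:c:] \<in> polyA"
  unfolding polyA_def by (auto simp: coeff_pCons kbar_0 split: nat.splits)

lemma polyA_0: "0 \<in> polyA" and polyA_1: "1 \<in> polyA"
  using polyA_const[OF kbar_0] polyA_const[OF kbar_1] by (auto simp: one_pCons)

lemma polyA_X: "[:0, 1:] \<in> polyA"
  unfolding polyA_def by (auto simp: coeff_pCons kbar_0 kbar_1 split: nat.splits)

lemma polyA_pCons: "pCons c p \<in> polyA \<longleftrightarrow> c \<in> kbar \<and> p \<in> polyA"
  unfolding polyA_def
  by (auto simp: coeff_pCons split: nat.splits)

lemma polyAA_iff: "P \<in> polyAA \<longleftrightarrow> (\<forall>i. coeff P i \<in> polyA)"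
  unfolding polyAA_def polyA_def by auto

lemma polyA_sum: "finite I \<Longrightarrow> (\<And>i. i \<in> I \<Longrightarrow> f i \<in> polyA) \<Longrightarrow> sum f I \<in> polyA"
  by (induction I rule: finite_induct) (auto intro: polyA_0 polyA_add)

lemma polyAA_add: "p \<in> polyAA \<Longrightarrow> q \<in> polyAA \<Longrightarrow> p + q \<in> polyAA"
  unfolding polyAA_iff by (auto intro: polyA_add)

lemma polyAA_mult: "p \<in> polyAA \<Longrightarrow> q \<in> polyAA \<Longrightarrow> p * q \<in> polyAA"
  unfolding polyAA_iff coeff_mult by (auto intro!: polyA_sum polyA_mult)

lemma polyAA_constA: "a \<in> polyA \<Longrightarrow> [:a:] \<in> polyAA"
  unfolding polyAA_iff by (auto simp: coeff_pCons polyA_0 split: nat.splits)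

lemma polyAA_0: "0 \<in> polyAA" and polyAA_1: "1 \<in> polyAA"
  using polyAA_constA[OF polyA_0] polyAA_constA[OF polyA_1] by (auto simp: one_pCons)

lemma polyAA_const: "c \<in> kbar \<Longrightarrow> [:[:c:]:] \<in> polyAA"
  by (intro polyAA_constA polyA_const)

section \<open>Ring homomorphisms\<close>

abbreviation CC :: "complex poly \<Rightarrow> complex poly poly" where
  "CC \<equiv> map_poly (\<lambda>c. [:c:])"

lemma CC_add: "CC (p + q) = CC p + CC q"
  by (intro poly_eqI) (simp add: coeff_map_poly)

lemma CC_pCons: "CC (pCons a p) = pCons [:a:] (CC p)"
  by (intro poly_eqI) (simp add: coeff_map_poly coeff_pCons split: nat.splits)

lemma CC_smult: "CC (Polynomial.smult a p) = Polynomial.smult [:a:] (CC p)"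
  by (rule map_poly_smult) auto

lemma CC_mult: "CC (p * q) = CC p * CC q"
proof (induction p)
  case 0 thus ?case by simp
next
  case (pCons a p)
  have "CC (pCons a p * q) = CC (Polynomial.smult a q) + CC (pCons 0 (p * q))" by (simp add: CC_add)
  also have "\<dots> = Polynomial.smult [:a:] (CC q) + pCons 0 (CC p * CC q)"
    by (simp add: CC_smult CC_pCons pCons.IH)
  also have "\<dots> = CC (pCons a p) * CC q" by (simp add: CC_pCons)
  finally show ?case .
qed

lemma CC_1: "CC 1 = 1" by simp
lemma CC_const: "CC [:c:] = [:[:c:]:]" by (simp add: CC_pCons)

lemma CC_polyAA: "a \<in> polyA \<Longrightarrow> CC a \<in> polyAA"
  unfolding polyAA_iff
proof
  fix i assume "a \<in> polyA"
  hence "coeff a i \<in> kbar" by (simp add: polyA_def)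
  thus "coeff (CC a) i \<in> polyA" by (simp add: coeff_map_poly polyA_const)
qed

definition LL :: "complex poly poly" where "LL = [: [:0, 1:], 1 :]"

lemma Delta_alt: "Delta p = pcompose (CC p) LL"
  unfolding Delta_def LL_def ..

lemma Delta_add: "Delta (p + q) = Delta p + Delta q"
  unfolding Delta_alt by (simp add: CC_add pcompose_add)
lemma Delta_mult: "Delta (p * q) = Delta p * Delta q"
  unfolding Delta_alt by (simp add: CC_mult pcompose_mult)
lemma Delta_1: "Delta 1 = 1"
  unfolding Delta_alt by (simp add: pcompose_1)
lemma Delta_0: "Delta 0 = 0"
  unfolding Delta_alt by simp
lemma Delta_const: "Delta [:c:] = [:[:c:]:]"
  unfolding Delta_alt by (simp add: CC_const)
lemma Delta_X: "Delta [:0, 1:] = LL"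
  unfolding Delta_alt by (simp add: CC_pCons pcompose_pCons LL_def)

lemma LL_polyAA: "LL \<in> polyAA"
  unfolding LL_def polyAA_iff by (auto simp: coeff_pCons polyA_X polyA_1 polyA_0 split: nat.splits)

lemma Delta_polyAA: "a \<in> polyA \<Longrightarrow> Delta a \<in> polyAA"
proof (induction a)
  case 0 thus ?case by (simp add: Delta_0 polyAA_0)
next
  case (pCons c p)
  hence c: "c \<in> kbar" and p: "p \<in> polyA" using polyA_pCons by auto
  have "Delta (pCons c p) = [:[:c:]:] + LL * Delta p"
    unfolding Delta_alt by (simp add: CC_pCons pcompose_pCons)
  thus ?case using pCons.IH[OF p] c by (auto intro!: polyAA_add polyAA_mult polyAA_const LL_polyAA)
qed

lemma j1_polyAA: "a \<in> polyA \<Longrightarrow> j1 a \<in> polyAA"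
  unfolding j1_def by (rule polyAA_constA)
lemma j2_polyAA: "a \<in> polyA \<Longrightarrow> j2 a \<in> polyAA"
  unfolding j2_def by (rule CC_polyAA)

lemma j1_X: "j1 [:0,1:] = [:[:0,1:]:]" unfolding j1_def ..
lemma j2_X: "j2 [:0,1:] = [:0,1:]" unfolding j2_def by (simp add: CC_pCons)
lemma Delta_X_split: "Delta [:0,1:] = j1 [:0,1:] + j2 [:0,1:]"
  unfolding Delta_X j1_X j2_X LL_def by simp

lemma Gan_from_tv:
  assumes "tv u" "\<And>c. c \<in> kbar \<Longrightarrow> c \<noteq> 0 \<Longrightarrow> u [:c:] = 0"
  shows "restrict u polyA \<in> Gan"
  unfolding Gan_def trop_hom_def
  using assms polyA_0 polyA_1 polyA_const
  by (auto simp: trop_def tv_0 tv_1 tv_mult tv_fin polyA_mult polyA_add tv_trop_add)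

lemma Gan2_from_tv:
  assumes "tv u" "\<And>c. c \<in> kbar \<Longrightarrow> c \<noteq> 0 \<Longrightarrow> u [:[:c:]:] = 0"
  shows "restrict u polyAA \<in> Gan2"
  unfolding Gan2_def trop_hom_def
  using assms polyAA_0 polyAA_1 polyAA_const
  by (auto simp: trop_def tv_0 tv_1 tv_mult tv_fin polyAA_mult polyAA_add tv_trop_add)



abbreviation XX :: "complex poly" where "XX \<equiv> [:0, 1:]"

lemma trop_add_le: "u \<in> trop_add a b \<Longrightarrow> u \<le> max a b"
  unfolding trop_add_def by (auto split: if_splits)

lemma trop_add_neg: "a < 0 \<Longrightarrow> b < 0 \<Longrightarrow> u \<in> trop_add a b \<Longrightarrow> u < 0"
  using trop_add_le[of u a b] by (metis le_less_trans max_less_iff_conj)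

lemma GanD:
  assumes "\<phi> \<in> Gan"
  shows "\<phi> \<in> polyA \<rightarrow>\<^sub>E trop" "\<phi> 0 = -\<infinity>" "\<phi> 1 = 0"
    "\<And>x y. x \<in> polyA \<Longrightarrow> y \<in> polyA \<Longrightarrow> \<phi> (x*y) = \<phi> x + \<phi> y"
    "\<And>x y. x \<in> polyA \<Longrightarrow> y \<in> polyA \<Longrightarrow> \<phi> (x+y) \<in> trop_add (\<phi> x) (\<phi> y)"
    "\<And>c. c \<in> kbar \<Longrightarrow> c \<noteq> 0 \<Longrightarrow> \<phi> [:c:] = 0"
  using assms unfolding Gan_def trop_hom_def by auto

lemma Gan2D:
  assumes "\<phi> \<in> Gan2"
  shows "\<And>x y. x \<in> polyAA \<Longrightarrow> y \<in> polyAA \<Longrightarrow> \<phi> (x+y) \<in> trop_add (\<phi> x) (\<phi> y)"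
  using assms unfolding Gan2_def trop_hom_def by auto

lemma X_mult: "XX * p = pCons 0 p" by simp

lemma pCons_split: "pCons c p = [:c:] + XX * p" by simp

lemma Gan_const_le: assumes "\<phi> \<in> Gan" "c \<in> kbar" shows "\<phi> [:c:] \<le> 0"
  using GanD(2)[OF assms(1)] GanD(6)[OF assms(1) assms(2)] by (cases "c = 0") auto

lemma Gan_le0:
  assumes "\<phi> \<in> Gan" "\<phi> XX < 0" "p \<in> polyA"
  shows "\<phi> p \<le> 0"
  using assms(3)
proof (induction p)
  case 0 thus ?case using GanD(2)[OF assms(1)] by simp
next
  case (pCons c p)
  hence c: "c \<in> kbar" and p: "p \<in> polyA" using polyA_pCons by auto
  have "\<phi> (XX * p) = \<phi> XX + \<phi> p" using GanD(4)[OF assms(1) polyA_X p] .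
  also have "\<dots> \<le> 0" by (metis add_nonpos_nonpos less_imp_le pCons.IH[OF p] assms(2))
  finally have 1: "\<phi> (XX * p) \<le> 0" .
  have "\<phi> (pCons c p) \<in> trop_add (\<phi> [:c:]) (\<phi> (XX * p))"
    by (subst pCons_split) (rule GanD(5)[OF assms(1) polyA_const[OF c] polyA_mult[OF polyA_X p]])
  hence "\<phi> (pCons c p) \<le> max (\<phi> [:c:]) (\<phi> (XX * p))" by (rule trop_add_le)
  thus ?case using 1 Gan_const_le[OF assms(1) c] by (meson max.boundedI order_trans)
qed

lemma Gan_unit:
  assumes "\<phi> \<in> Gan" "\<phi> XX < 0" "p \<in> polyA" "coeff p 0 \<noteq> 0"
  shows "\<phi> p = 0"
proof -
  obtain c q where p: "p = pCons c q" by (cases p)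
  hence c: "c \<in> kbar" "c \<noteq> 0" and q: "q \<in> polyA" using assms(3,4) polyA_pCons by auto
  have "\<phi> (XX * q) = \<phi> XX + \<phi> q" using GanD(4)[OF assms(1) polyA_X q] .
  also have "\<dots> \<le> \<phi> XX + 0" by (rule add_left_mono) (rule Gan_le0[OF assms(1,2) q])
  finally have 1: "\<phi> (XX * q) < 0" using assms(2) by simp
  have "\<phi> p \<in> trop_add (\<phi> [:c:]) (\<phi> (XX * q))"
    unfolding p by (subst pCons_split) (rule GanD(5)[OF assms(1) polyA_const[OF c(1)] polyA_mult[OF polyA_X q]])
  thus ?thesis using GanD(6)[OF assms(1) c] 1 unfolding trop_add_def by (auto split: if_splits)
qed

lemma Gan_eq_on:
  assumes "\<phi> \<in> Gan" "\<psi> \<in> Gan" "\<phi> XX = \<psi> XX" "\<phi> XX < 0" "p \<in> polyA"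
  shows "\<phi> p = \<psi> p"
  using assms(5)
proof (induction p)
  case 0 thus ?case using GanD(2)[OF assms(1)] GanD(2)[OF assms(2)] by simp
next
  case (pCons c p)
  hence c: "c \<in> kbar" and p: "p \<in> polyA" using polyA_pCons by auto
  show ?case
  proof (cases "c = 0")
    case False
    thus ?thesis using Gan_unit[OF assms(1,4) pCons.prems] Gan_unit[OF assms(2) _ pCons.prems] assms(3,4) by simp
  next
    case True
    have pc: "pCons c p = XX * p" using True by simp
    have "\<phi> (pCons c p) = \<phi> XX + \<phi> p" unfolding pc by (rule GanD(4)[OF assms(1) polyA_X p])
    also have "\<dots> = \<psi> XX + \<psi> p" using assms(3) pCons.IH[OF p] by simp
    also have "\<dots> = \<psi> (pCons c p)" unfolding pc by (rule GanD(4)[OF assms(2) polyA_X p, symmetric])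
    finally show ?thesis .
  qed
qed

lemma Gan_unique:
  assumes "\<phi> \<in> Gan" "\<psi> \<in> Gan" "\<phi> XX = \<psi> XX" "\<phi> XX < 0"
  shows "\<phi> = \<psi>"
proof
  fix p show "\<phi> p = \<psi> p"
  proof (cases "p \<in> polyA")
    case True thus ?thesis using Gan_eq_on[OF assms] by blast
  next
    case False thus ?thesis using PiE_arb[OF GanD(1)[OF assms(1)]] PiE_arb[OF GanD(1)[OF assms(2)]] by simp
  qed
qed

lemma gauss_triv_X: "r \<noteq> \<infinity> \<Longrightarrow> gauss triv r XX = r"
  using gauss_lin[OF tv_triv, of r 0] by (simp add: triv_def)

lemma Hset_exists:
  assumes "r \<in> trop_neg"
  shows "\<exists>h\<in>Hset. h XX = r"
proof -
  have r: "r \<noteq> \<infinity>" "r < 0" using assms unfolding trop_neg_def by auto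
  have tv: "tv (gauss triv r)" by (rule tv_gauss[OF tv_triv r(1)])
  have "restrict (gauss triv r) polyA \<in> Gan"
    by (rule Gan_from_tv[OF tv]) (simp add: gauss_const[OF tv_triv r(1)] triv_def)
  moreover have "restrict (gauss triv r) polyA XX = r" using polyA_X gauss_triv_X[OF r(1)] by simp
  ultimately show ?thesis using r unfolding Hset_def by (intro bexI[of _ "restrict (gauss triv r) polyA"]) auto
qed

lemma berk_construct:
  assumes g: "g \<in> Hset" and h: "h \<in> Hset" and tv: "tv \<gamma>"
    and r0: "\<rho> 0 = 0" and r1: "\<rho> 1 = 1" and rm: "\<And>x y. \<rho> (x*y) = \<rho> x * \<rho> y"
    and ra: "\<And>x y. \<rho> (x+y) = \<rho> x + \<rho> y" and rc: "\<And>c. \<rho> [:[:c:]:] = [:[:c:]:]"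
    and gc: "\<And>c. c \<in> kbar \<Longrightarrow> c \<noteq> 0 \<Longrightarrow> \<gamma> [:[:c:]:] = 0"
    and gj1: "\<gamma> (\<rho> (j1 XX)) = g XX" and gj2: "\<gamma> (\<rho> (j2 XX)) = h XX"
  shows "\<exists>f\<in>berk_op g h. f XX = \<gamma> (\<rho> (Delta XX))"
proof -
  define u where "u = (\<lambda>P. \<gamma> (\<rho> P))"
  have tvu: "tv u" unfolding u_def by (rule tv_comp[OF tv r0 r1 rm ra])
  have uc: "u [:[:c:]:] = 0" if "c \<in> kbar" "c \<noteq> 0" for c unfolding u_def rc using gc that .
  define \<beta> where "\<beta> = restrict u polyAA"
  have \<beta>: "\<beta> \<in> Gan2" unfolding \<beta>_def by (rule Gan2_from_tv[OF tvu uc])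
  define f where "f = restrict (\<lambda>a. u (Delta a)) polyA"
  have f: "f \<in> Gan" unfolding f_def
    by (rule Gan_from_tv[OF tv_comp[OF tvu Delta_0 Delta_1 Delta_mult Delta_add]]) (simp add: Delta_const uc)
  have gG: "g \<in> Gan" "g XX < 0" and hG: "h \<in> Gan" "h XX < 0" using g h unfolding Hset_def by auto
  define g' where "g' = restrict (\<lambda>a. u (j1 a)) polyA"
  have g': "g' \<in> Gan" unfolding g'_def
    by (rule Gan_from_tv[OF tv_comp[OF tvu]]) (auto simp: j1_def uc)
  have "g' XX = g XX" using polyA_X gj1 unfolding g'_def u_def by simp
  hence gg: "g' = g" using Gan_unique[OF g' gG(1)] gG(2) by simp
  define h' where "h' = restrict (\<lambda>a. u (j2 a)) polyA"
  have h': "h' \<in> Gan" unfolding h'_def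
    by (rule Gan_from_tv[OF tv_comp[OF tvu]]) (auto simp: j2_def uc CC_add CC_mult CC_const)
  have "h' XX = h XX" using polyA_X gj2 unfolding h'_def u_def by simp
  hence hh: "h' = h" using Gan_unique[OF h' hG(1)] hG(2) by simp
  have "f \<in> berk_op g h"
    unfolding berk_op_def
  proof (intro CollectI conjI f bexI[OF _ \<beta>] ballI)
    fix a assume a: "a \<in> polyA"
    show "\<beta> (j1 a) = g a" using a j1_polyAA[OF a] unfolding \<beta>_def gg[symmetric] g'_def by simp
    show "\<beta> (j2 a) = h a" using a j2_polyAA[OF a] unfolding \<beta>_def hh[symmetric] h'_def by simp
    show "f a = \<beta> (Delta a)" using a Delta_polyAA[OF a] unfolding \<beta>_def f_def by simp
  qed
  moreover have "f XX = \<gamma> (\<rho> (Delta XX))" using polyA_X unfolding f_def u_def by simp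
  ultimately show ?thesis by blast
qed

lemma berk_sub:
  assumes "g \<in> Hset" "h \<in> Hset" "f \<in> berk_op g h"
  shows "f \<in> Gan" "f XX \<in> trop_add (g XX) (h XX)"
proof -
  from assms(3) obtain \<beta> where f: "f \<in> Gan" and \<beta>: "\<beta> \<in> Gan2"
    and eq: "\<And>a. a \<in> polyA \<Longrightarrow> \<beta> (j1 a) = g a \<and> \<beta> (j2 a) = h a \<and> f a = \<beta> (Delta a)"
    unfolding berk_op_def by blast
  show "f \<in> Gan" by (rule f)
  have "f XX = \<beta> (j1 XX + j2 XX)" using eq[OF polyA_X] Delta_X_split by simp
  also have "\<dots> \<in> trop_add (\<beta> (j1 XX)) (\<beta> (j2 XX))"
    by (rule Gan2D[OF \<beta> j1_polyAA[OF polyA_X] j2_polyAA[OF polyA_X]])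
  finally show "f XX \<in> trop_add (g XX) (h XX)" using eq[OF polyA_X] by simp
qed

lemma berk_closed:
  assumes "g \<in> Hset" "h \<in> Hset" "f \<in> berk_op g h"
  shows "f \<in> Hset"
  using berk_sub[OF assms] assms(1,2) trop_add_neg unfolding Hset_def by blast

definition MM :: "complex poly poly" where "MM = [: - [:0, 1:], 1 :]"

lemma berk_image:
  assumes g: "g \<in> Hset" and h: "h \<in> Hset"
  shows "(\<lambda>f. f XX) ` berk_op g h = trop_add (g XX) (h XX)"
proof
  show "(\<lambda>f. f XX) ` berk_op g h \<subseteq> trop_add (g XX) (h XX)" using berk_sub(2)[OF g h] by blast
  show "trop_add (g XX) (h XX) \<subseteq> (\<lambda>f. f XX) ` berk_op g h"
  proof
    fix t assume t: "t \<in> trop_add (g XX) (h XX)"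
    define r where "r = g XX"
    define s where "s = h XX"
    have rs: "r < 0" "s < 0" using g h unfolding Hset_def r_def s_def by auto
    have tv1: "tv (gauss (triv::complex\<Rightarrow>ereal) r)" using rs by (intro tv_gauss[OF tv_triv]) auto
    have gc1: "gauss (triv::complex\<Rightarrow>ereal) r [:c:] = triv c" for c using rs by (intro gauss_const[OF tv_triv]) auto
    have g0: "gauss (triv::complex\<Rightarrow>ereal) r 0 = -\<infinity>" using rs by (intro gauss_zero[OF tv_triv]) auto
    have gX: "gauss (triv::complex\<Rightarrow>ereal) r XX = r" using rs by (intro gauss_triv_X) auto
    show "t \<in> (\<lambda>f. f XX) ` berk_op g h"
    proof (cases "r = s")
      case False
      hence tm: "t = max r s" using t unfolding trop_add_def r_def s_def by auto
      define \<gamma> :: "complex poly poly \<Rightarrow> ereal" where "\<gamma> = gauss (gauss (triv::complex\<Rightarrow>ereal) r) s"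
      have tv: "tv \<gamma>" unfolding \<gamma>_def using rs by (intro tv_gauss[OF tv1]) auto
      have gc: "\<gamma> [:x:] = gauss (triv::complex\<Rightarrow>ereal) r x" for x unfolding \<gamma>_def using rs by (intro gauss_const[OF tv1]) auto
      have gl: "\<gamma> [:x, 1:] = max (gauss (triv::complex\<Rightarrow>ereal) r x) s" for x unfolding \<gamma>_def using rs by (intro gauss_lin[OF tv1]) auto
      have "\<exists>f\<in>berk_op g h. f XX = \<gamma> (id (Delta XX))"
      proof (rule berk_construct[OF g h tv])
        show "\<And>c. c \<in> kbar \<Longrightarrow> c \<noteq> 0 \<Longrightarrow> \<gamma> [:[:c:]:] = 0" by (simp add: gc gc1 triv_def)
        show "\<gamma> (id (j1 XX)) = g XX" by (simp add: j1_X gc gX r_def[symmetric])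
        show "\<gamma> (id (j2 XX)) = h XX" using gl[of 0] by (simp add: j2_X g0 s_def[symmetric])
      qed auto
      moreover have "\<gamma> (id (Delta XX)) = t" using gl[of XX] by (simp add: Delta_X LL_def gX tm)
      ultimately obtain f where "f \<in> berk_op g h" "f XX = t" by auto
      thus ?thesis by (metis image_eqI)
    next
      case True
      have tle: "t \<le> r" "t \<noteq> \<infinity>" using t True unfolding trop_add_def trop_def r_def s_def by auto
      define \<gamma> :: "complex poly poly \<Rightarrow> ereal" where "\<gamma> = gauss (gauss (triv::complex\<Rightarrow>ereal) r) t"
      have tv: "tv \<gamma>" unfolding \<gamma>_def using tle by (intro tv_gauss[OF tv1]) auto
      have gc: "\<gamma> [:x:] = gauss (triv::complex\<Rightarrow>ereal) r x" for x unfolding \<gamma>_def using tle by (intro gauss_const[OF tv1]) auto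
      have gl: "\<gamma> [:x, 1:] = max (gauss (triv::complex\<Rightarrow>ereal) r x) t" for x unfolding \<gamma>_def using tle by (intro gauss_lin[OF tv1]) auto
      have "\<exists>f\<in>berk_op g h. f XX = \<gamma> ((\<lambda>P. pcompose P MM) (Delta XX))"
      proof (rule berk_construct[OF g h tv])
        show "\<And>c. c \<in> kbar \<Longrightarrow> c \<noteq> 0 \<Longrightarrow> \<gamma> [:[:c:]:] = 0" by (simp add: gc gc1 triv_def)
        show "\<gamma> ((\<lambda>P. pcompose P MM) (j1 XX)) = g XX" by (simp add: j1_X gc gX r_def[symmetric])
        have "gauss (triv::complex\<Rightarrow>ereal) r (- XX) = r" by (subst tv_uminus[OF tv1]) (rule gX)
        thus "\<gamma> ((\<lambda>P. pcompose P MM) (j2 XX)) = h XX" using gl[of "- XX"] tle True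
          by (simp add: j2_X MM_def pcompose_pCons s_def[symmetric] r_def[symmetric] max_def)
      qed (auto simp: pcompose_1 pcompose_mult pcompose_add)
      moreover have "\<gamma> ((\<lambda>P. pcompose P MM) (Delta XX)) = t"
        using gl[of 0] by (simp add: Delta_X LL_def MM_def pcompose_pCons g0)
      ultimately obtain f where "f \<in> berk_op g h" "f XX = t" by auto
      thus ?thesis by (metis image_eqI)
    qed
  qed
qed

lemma phi_bij: "bij_betw (\<lambda>h. h XX) Hset trop_neg"
proof (rule bij_betw_imageI)
  show "inj_on (\<lambda>h. h XX) Hset"
    by (rule inj_onI) (auto simp: Hset_def intro: Gan_unique)
  show "(\<lambda>h. h XX) ` Hset = trop_neg"
    using Hset_exists by (auto simp: Hset_def trop_neg_def)
qed



definition T3 :: "ereal \<Rightarrow> ereal \<Rightarrow> ereal \<Rightarrow> ereal set" where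
  "T3 x y z = {u. u \<noteq> \<infinity> \<and> u \<le> max x (max y z) \<and>
     (u = max x (max y z) \<or> (x = max x (max y z) \<and> y = max x (max y z)) \<or>
      (x = max x (max y z) \<and> z = max x (max y z)) \<or> (y = max x (max y z) \<and> z = max x (max y z)))}"

lemma trop_add_neg': "x < 0 \<Longrightarrow> y < 0 \<Longrightarrow> u \<in> trop_add x y \<Longrightarrow> u < (0::ereal)"
  unfolding trop_add_def by (auto split: if_splits)

lemma T3_sym: "T3 y z x = T3 x y z"
  unfolding T3_def by (auto simp: max.commute max.left_commute)

lemma trop_add_comm: "trop_add a b = trop_add b a"
  unfolding trop_add_def by (auto simp: max.commute)

lemma assoc_sub: 
  assumes "x \<noteq> \<infinity>" "y \<noteq> \<infinity>" "z \<noteq> \<infinity>" "w \<in> trop_add x y" "u \<in> trop_add w z"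
  shows "u \<in> T3 x y z"
  using assms unfolding T3_def trop_add_def trop_def
  by (auto simp: max_def split: if_splits)

lemma assoc_sup:
  assumes "x \<noteq> \<infinity>" "y \<noteq> \<infinity>" "z \<noteq> \<infinity>" "u \<in> T3 x y z"
  shows "\<exists>w\<in>trop_add x y. u \<in> trop_add w z"
proof (cases "x = y")
  case False
  thus ?thesis using assms unfolding T3_def trop_add_def trop_def
    by (auto simp: max_def split: if_splits)
next
  case True
  show ?thesis
  proof (cases "z > x")
    case True
    thus ?thesis using assms \<open>x = y\<close> unfolding T3_def trop_add_def trop_def
      by (intro bexI[of _ x]) (auto simp: max_def)
  next
    case False
    show ?thesis
    proof (cases "u \<le> z")
      case True
      thus ?thesis using assms \<open>x = y\<close> \<open>\<not> z > x\<close> unfolding T3_def trop_add_def trop_def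
        by (intro bexI[of _ z]) (auto simp: max_def)
    next
      case False
      thus ?thesis using assms \<open>x = y\<close> \<open>\<not> z > x\<close> unfolding T3_def trop_add_def trop_def
        by (intro bexI[of _ u]) (auto simp: max_def)
    qed
  qed
qed

lemma trop_assoc:
  assumes "x \<noteq> \<infinity>" "y \<noteq> \<infinity>" "z \<noteq> \<infinity>"
  shows "(\<Union>w\<in>trop_add x y. trop_add w z) = (\<Union>w\<in>trop_add y z. trop_add x w)"
proof -
  have L: "(\<Union>w\<in>trop_add x y. trop_add w z) = T3 x y z"
    if "x \<noteq> \<infinity>" "y \<noteq> \<infinity>" "z \<noteq> \<infinity>" for x y z :: ereal
    using assoc_sub[OF that] assoc_sup[OF that] by blast
  have "(\<Union>w\<in>trop_add y z. trop_add x w) = (\<Union>w\<in>trop_add y z. trop_add w x)"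
    using trop_add_comm by auto
  also have "\<dots> = T3 y z x" using L assms by blast
  also have "\<dots> = T3 x y z" by (rule T3_sym)
  finally show ?thesis using L assms by simp
qed

lemma trop_hyp_identity: "hyp_identity trop_neg trop_add e \<longleftrightarrow> e = -\<infinity>"
proof
  assume e: "hyp_identity trop_neg trop_add e"
  hence "e \<in> trop_neg" "trop_add e e = {e}" unfolding hyp_identity_def by auto
  show "e = -\<infinity>"
  proof (rule ccontr)
    assume "e \<noteq> -\<infinity>"
    have "-\<infinity> \<in> trop_add e e" unfolding trop_add_def trop_def by auto
    thus False using \<open>trop_add e e = {e}\<close> \<open>e \<noteq> -\<infinity>\<close> by auto
  qed
next
  assume "e = -\<infinity>"
  thus "hyp_identity trop_neg trop_add e"
    unfolding hyp_identity_def trop_neg_def trop_add_def trop_def by auto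
qed

lemma trop_inv: "x \<in> trop_neg \<Longrightarrow> -\<infinity> \<in> trop_add x x' \<longleftrightarrow> x' = x"
  unfolding trop_add_def trop_def trop_neg_def by (auto simp: max_def split: if_splits)

lemma trop_add_same: "y \<noteq> \<infinity> \<Longrightarrow> x \<le> y \<Longrightarrow> y \<in> trop_add x y"
  unfolding trop_add_def trop_def by (cases "x = y") (auto simp: max_def)

lemma trop_rev:
  assumes "y \<noteq> \<infinity>" "z \<noteq> \<infinity>" "x \<in> trop_add y z"
  shows "y \<in> trop_add x z \<and> z \<in> trop_add y x"
proof (cases "y = z")
  case True
  hence "x \<le> y" using assms unfolding trop_add_def by auto
  thus ?thesis using True assms trop_add_same[of y x] trop_add_comm[of x y] by auto
next
  case False
  hence x: "x = max y z" using assms unfolding trop_add_def by auto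
  show ?thesis
  proof (cases "y < z")
    case True
    hence "x = z" using x by simp
    thus ?thesis using True assms trop_add_same[of z y] trop_add_comm[of y z] unfolding trop_add_def trop_def
      by auto
  next
    case False
    hence "z < y" using \<open>y \<noteq> z\<close> by auto
    hence "x = y" using x by simp
    thus ?thesis using \<open>z < y\<close> assms unfolding trop_add_def trop_def by auto
  qed
qed

lemma trop_hypergroup: "hypergroup trop_neg trop_add"
  unfolding hypergroup_def
proof (intro conjI ballI allI impI)
  fix x y assume "x \<in> trop_neg" "y \<in> trop_neg"
  thus "trop_add x y \<subseteq> trop_neg"
    using trop_add_neg'[of x y] unfolding trop_neg_def by blast
next
  fix x y z assume "x \<in> trop_neg" "y \<in> trop_neg" "z \<in> trop_neg"
  thus "(\<Union>w\<in>trop_add x y. trop_add w z) = (\<Union>w\<in>trop_add y z. trop_add x w)"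
    unfolding trop_neg_def by (intro trop_assoc) auto
next
  show "\<exists>!e. hyp_identity trop_neg trop_add e" using trop_hyp_identity by auto
next
  fix e x assume "hyp_identity trop_neg trop_add e" "x \<in> trop_neg"
  hence e: "e = -\<infinity>" using trop_hyp_identity by auto
  show "\<exists>!x'. x' \<in> trop_neg \<and> e \<in> trop_add x x' \<and> e \<in> trop_add x' x"
  proof (rule ex1I[of _ x])
    show "x \<in> trop_neg \<and> e \<in> trop_add x x \<and> e \<in> trop_add x x"
      using trop_inv[OF \<open>x \<in> trop_neg\<close>, of x] \<open>x \<in> trop_neg\<close> e by simp
    fix x' assume "x' \<in> trop_neg \<and> e \<in> trop_add x x' \<and> e \<in> trop_add x' x"
    thus "x' = x" using trop_inv[OF \<open>x \<in> trop_neg\<close>, of x'] e by simp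
  qed
next
  fix e x y z y' z' assume eid: "hyp_identity trop_neg trop_add e"
    and xyz: "x \<in> trop_neg" "y \<in> trop_neg" "z \<in> trop_neg" "y' \<in> trop_neg" "z' \<in> trop_neg"
    and inv: "e \<in> trop_add y y' \<and> e \<in> trop_add y' y \<and> e \<in> trop_add z z' \<and> e \<in> trop_add z' z"
    and x: "x \<in> trop_add y z"
  have e: "e = -\<infinity>" using eid trop_hyp_identity by auto
  have yz: "y' = y" "z' = z" using inv trop_inv[OF xyz(2), of y'] trop_inv[OF xyz(3), of z'] unfolding e by auto
  have "y \<noteq> \<infinity>" "z \<noteq> \<infinity>" using xyz unfolding trop_neg_def by auto
  hence "y \<in> trop_add x z' \<and> z \<in> trop_add y' x"
    using trop_rev x unfolding yz by blast
  thus "y \<in> trop_add x z'" "z \<in> trop_add y' x" by auto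
qed

context
  fixes S :: "'a set" and op :: "'a \<Rightarrow> 'a \<Rightarrow> 'a set" and S' :: "'b set" and op' and \<phi> :: "'a \<Rightarrow> 'b"
  assumes hg: "hypergroup S' op'" and bij: "bij_betw \<phi> S S'"
    and cl: "\<And>x y. x \<in> S \<Longrightarrow> y \<in> S \<Longrightarrow> op x y \<subseteq> S"
    and hom: "\<And>x y. x \<in> S \<Longrightarrow> y \<in> S \<Longrightarrow> \<phi> ` op x y = op' (\<phi> x) (\<phi> y)"
begin

lemma tr_inj: "inj_on \<phi> S" and tr_img: "\<phi> ` S = S'" using bij by (auto simp: bij_betw_def)

lemma tr_key: assumes xyS: "x \<in> S" "y \<in> S" "w \<in> S"
  shows "w \<in> op x y \<longleftrightarrow> \<phi> w \<in> op' (\<phi> x) (\<phi> y)"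
proof
  assume "w \<in> op x y" thus "\<phi> w \<in> op' (\<phi> x) (\<phi> y)" using hom[OF xyS(1,2)] by blast
next
  assume "\<phi> w \<in> op' (\<phi> x) (\<phi> y)"
  then obtain w' where "w' \<in> op x y" "\<phi> w' = \<phi> w" using hom[OF xyS(1,2)] by (metis imageE)
  moreover have "w' \<in> S" using cl[OF xyS(1,2)] \<open>w' \<in> op x y\<close> by blast
  ultimately show "w \<in> op x y" using tr_inj xyS(3) by (metis inj_on_def)
qed

lemma ex1_eq: "\<exists>!x. P x \<Longrightarrow> P a \<Longrightarrow> P b \<Longrightarrow> a = b" by blast

lemma tr_H: "(\<forall>x\<in>S'. \<forall>y\<in>S'. op' x y \<subseteq> S') \<and>
     (\<forall>x\<in>S'. \<forall>y\<in>S'. \<forall>z\<in>S'. (\<Union>w\<in>op' x y. op' w z) = (\<Union>w\<in>op' y z. op' x w)) \<and>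
     (\<exists>!e. hyp_identity S' op' e) \<and>
     (\<forall>e. hyp_identity S' op' e \<longrightarrow>
        (\<forall>x\<in>S'. \<exists>!x'. x' \<in> S' \<and> e \<in> op' x x' \<and> e \<in> op' x' x) \<and>
        (\<forall>x\<in>S'. \<forall>y\<in>S'. \<forall>z\<in>S'. \<forall>y'\<in>S'. \<forall>z'\<in>S'.
            e \<in> op' y y' \<and> e \<in> op' y' y \<and> e \<in> op' z z' \<and> e \<in> op' z' z \<longrightarrow>
            x \<in> op' y z \<longrightarrow> y \<in> op' x z' \<and> z \<in> op' y' x))"
  using hg unfolding hypergroup_def .

lemma tr_hg2: "x \<in> S' \<Longrightarrow> y \<in> S' \<Longrightarrow> z \<in> S' \<Longrightarrow> (\<Union>w\<in>op' x y. op' w z) = (\<Union>w\<in>op' y z. op' x w)"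
  using conjunct1[OF conjunct2[OF tr_H]] by blast

lemma tr_hg3: "\<exists>!e. hyp_identity S' op' e"
  by (rule conjunct1[OF conjunct2[OF conjunct2[OF tr_H]]])

lemma tr_hg45: "hyp_identity S' op' e \<Longrightarrow>
        (\<forall>x\<in>S'. \<exists>!x'. x' \<in> S' \<and> e \<in> op' x x' \<and> e \<in> op' x' x) \<and>
        (\<forall>x\<in>S'. \<forall>y\<in>S'. \<forall>z\<in>S'. \<forall>y'\<in>S'. \<forall>z'\<in>S'.
            e \<in> op' y y' \<and> e \<in> op' y' y \<and> e \<in> op' z z' \<and> e \<in> op' z' z \<longrightarrow>
            x \<in> op' y z \<longrightarrow> y \<in> op' x z' \<and> z \<in> op' y' x)"
  by (rule mp[OF spec[OF conjunct2[OF conjunct2[OF conjunct2[OF tr_H]]]]])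

lemma tr_hg4: "hyp_identity S' op' e \<Longrightarrow> x \<in> S' \<Longrightarrow> \<exists>!x'. x' \<in> S' \<and> e \<in> op' x x' \<and> e \<in> op' x' x"
  using conjunct1[OF tr_hg45] by blast

lemma tr_hg5: "hyp_identity S' op' e \<Longrightarrow> x \<in> S' \<Longrightarrow> y \<in> S' \<Longrightarrow> z \<in> S' \<Longrightarrow> y' \<in> S' \<Longrightarrow> z' \<in> S' \<Longrightarrow>
            e \<in> op' y y' \<Longrightarrow> e \<in> op' y' y \<Longrightarrow> e \<in> op' z z' \<Longrightarrow> e \<in> op' z' z \<Longrightarrow>
            x \<in> op' y z \<Longrightarrow> y \<in> op' x z' \<and> z \<in> op' y' x"
  using conjunct2[OF tr_hg45] by blast

lemma tr_inS: "x \<in> S \<Longrightarrow> \<phi> x \<in> S'" using tr_img by blast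

lemma tr_single: assumes "A \<subseteq> S" "x \<in> S" "\<phi> ` A = {\<phi> x}" shows "A = {x}"
proof -
  have "a = x" if "a \<in> A" for a
  proof -
    have "\<phi> a = \<phi> x" using assms(3) \<open>a \<in> A\<close> by blast
    moreover have "a \<in> S" using assms(1) \<open>a \<in> A\<close> by blast
    ultimately show ?thesis using tr_inj assms(2) by (simp add: inj_on_eq_iff)
  qed
  moreover have "A \<noteq> {}" using assms(3) by auto
  ultimately show ?thesis by blast
qed

lemma tr_ident1: assumes e: "hyp_identity S op e" shows "e \<in> S" "hyp_identity S' op' (\<phi> e)"
proof -
  show eS: "e \<in> S" using e unfolding hyp_identity_def by blast
  have "op' (\<phi> e) x' = {x'} \<and> op' x' (\<phi> e) = {x'}" if "x' \<in> S'" for x'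
  proof -
    obtain x where x: "x \<in> S" "x' = \<phi> x" using \<open>x' \<in> S'\<close> tr_img by blast
    have "op e x = {x}" "op x e = {x}" using e x unfolding hyp_identity_def by auto
    thus ?thesis using hom[OF eS x(1)] hom[OF x(1) eS] x by simp
  qed
  thus "hyp_identity S' op' (\<phi> e)" using eS tr_inS unfolding hyp_identity_def by blast
qed

lemma tr_ident2: assumes e: "e \<in> S" "hyp_identity S' op' (\<phi> e)" shows "hyp_identity S op e"
proof -
  have H: "\<forall>x'\<in>S'. op' (\<phi> e) x' = {x'} \<and> op' x' (\<phi> e) = {x'}"
    using e(2) unfolding hyp_identity_def by (rule conjunct2)
  show ?thesis
    unfolding hyp_identity_def
  proof (intro conjI ballI)
    show "e \<in> S" by (rule e(1))
    fix x assume x: "x \<in> S"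
    have 1: "op' (\<phi> e) (\<phi> x) = {\<phi> x}" "op' (\<phi> x) (\<phi> e) = {\<phi> x}"
      using bspec[OF H tr_inS[OF x]] by auto
    have "\<phi> ` op e x = {\<phi> x}" using hom[OF e(1) x] 1(1) by simp
    thus "op e x = {x}" by (rule tr_single[OF cl[OF e(1) x] x])
    have "\<phi> ` op x e = {\<phi> x}" using hom[OF x e(1)] 1(2) by simp
    thus "op x e = {x}" by (rule tr_single[OF cl[OF x e(1)] x])
  qed
qed

lemma tr_assoc: assumes xyz: "x \<in> S" "y \<in> S" "z \<in> S"
  shows "(\<Union>w\<in>op x y. op w z) = (\<Union>w\<in>op y z. op x w)"
proof -
  have sub1: "(\<Union>w\<in>op x y. op w z) \<subseteq> S" using cl xyz by blast
  have sub2: "(\<Union>w\<in>op y z. op x w) \<subseteq> S" using cl xyz by blast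
  have "\<phi> ` (\<Union>w\<in>op x y. op w z) = (\<Union>w\<in>op x y. \<phi> ` op w z)" by (rule image_UN)
  also have "\<dots> = (\<Union>w\<in>op x y. op' (\<phi> w) (\<phi> z))"
  proof (rule SUP_cong[OF refl])
    fix w assume "w \<in> op x y" hence "w \<in> S" using cl xyz by blast
    thus "\<phi> ` op w z = op' (\<phi> w) (\<phi> z)" using hom xyz by blast
  qed
  also have "\<dots> = (\<Union>w'\<in>\<phi> ` op x y. op' w' (\<phi> z))" by (simp add: image_image)
  also have "\<dots> = (\<Union>w'\<in>op' (\<phi> x) (\<phi> y). op' w' (\<phi> z))" using hom xyz by simp
  also have "\<dots> = (\<Union>w'\<in>op' (\<phi> y) (\<phi> z). op' (\<phi> x) w')" using tr_hg2 tr_inS xyz by simp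
  also have "\<dots> = (\<Union>w'\<in>\<phi> ` op y z. op' (\<phi> x) w')" using hom xyz by simp
  also have "\<dots> = (\<Union>w\<in>op y z. op' (\<phi> x) (\<phi> w))" by (simp add: image_image)
  also have "\<dots> = (\<Union>w\<in>op y z. \<phi> ` op x w)"
  proof (rule SUP_cong[OF refl])
    fix w assume "w \<in> op y z" hence "w \<in> S" using cl xyz by blast
    thus "op' (\<phi> x) (\<phi> w) = \<phi> ` op x w" using hom xyz by blast
  qed
  also have "\<dots> = \<phi> ` (\<Union>w\<in>op y z. op x w)" by (rule image_UN[symmetric])
  finally show ?thesis using inj_on_image_eq_iff[OF tr_inj sub1 sub2] by simp
qed

lemma tr_ex1_ident: "\<exists>!e. hyp_identity S op e"
proof -
  obtain e' where e': "hyp_identity S' op' e'" using tr_hg3 by blast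
  then obtain e where "e \<in> S" "\<phi> e = e'" using tr_img unfolding hyp_identity_def by blast
  hence ex: "hyp_identity S op e" using tr_ident2 e' by simp
  show ?thesis
  proof (rule ex1I[of _ e])
    show "hyp_identity S op e" by (rule ex)
    fix e2 assume e2: "hyp_identity S op e2"
    have "\<phi> e2 = \<phi> e" using ex1_eq[OF tr_hg3 tr_ident1(2)[OF e2] tr_ident1(2)[OF ex]] .
    thus "e2 = e" using tr_ident1(1)[OF e2] tr_ident1(1)[OF ex] tr_inj by (simp add: inj_on_eq_iff)
  qed
qed

lemma tr_inv: assumes e: "hyp_identity S op e" and x: "x \<in> S"
  shows "\<exists>!x'. x' \<in> S \<and> e \<in> op x x' \<and> e \<in> op x' x"
proof -
  have eS: "e \<in> S" and e': "hyp_identity S' op' (\<phi> e)" using tr_ident1[OF e] by auto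
  have E: "\<exists>!x'. x' \<in> S' \<and> \<phi> e \<in> op' (\<phi> x) x' \<and> \<phi> e \<in> op' x' (\<phi> x)"
    by (rule tr_hg4[OF e' tr_inS[OF x]])
  obtain y' where y': "y' \<in> S'" "\<phi> e \<in> op' (\<phi> x) y'" "\<phi> e \<in> op' y' (\<phi> x)"
    using ex1_implies_ex[OF E] by blast
  then obtain y where y: "y \<in> S" "\<phi> y = y'" using tr_img by blast
  have ex: "y \<in> S \<and> e \<in> op x y \<and> e \<in> op y x" using tr_key[OF x y(1) eS] tr_key[OF y(1) x eS] y y' by simp
  show ?thesis
  proof (rule ex1I[of _ y])
    show "y \<in> S \<and> e \<in> op x y \<and> e \<in> op y x" by (rule ex)
    fix y2 assume y2: "y2 \<in> S \<and> e \<in> op x y2 \<and> e \<in> op y2 x"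
    have "\<phi> y2 \<in> S' \<and> \<phi> e \<in> op' (\<phi> x) (\<phi> y2) \<and> \<phi> e \<in> op' (\<phi> y2) (\<phi> x)"
      using y2 tr_key[OF x _ eS, of y2] tr_key[OF _ x eS, of y2] tr_inS by blast
    moreover have "\<phi> y \<in> S' \<and> \<phi> e \<in> op' (\<phi> x) (\<phi> y) \<and> \<phi> e \<in> op' (\<phi> y) (\<phi> x)"
      using y y' by simp
    ultimately have "\<phi> y2 = \<phi> y" by (rule ex1_eq[OF E])
    thus "y2 = y" using y2 y(1) tr_inj by (meson inj_onD)
  qed
qed

lemma tr_rev: assumes e: "hyp_identity S op e"
    and xyz: "x \<in> S" "y \<in> S" "z \<in> S" "y' \<in> S" "z' \<in> S"
    and inv: "e \<in> op y y'" "e \<in> op y' y" "e \<in> op z z'" "e \<in> op z' z"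
    and xin: "x \<in> op y z"
  shows "y \<in> op x z' \<and> z \<in> op y' x"
proof -
  have eS: "e \<in> S" and e': "hyp_identity S' op' (\<phi> e)" using tr_ident1[OF e] by auto
  have i1: "\<phi> e \<in> op' (\<phi> y) (\<phi> y')" using inv(1) tr_key[OF xyz(2) xyz(4) eS] by blast
  have i2: "\<phi> e \<in> op' (\<phi> y') (\<phi> y)" using inv(2) tr_key[OF xyz(4) xyz(2) eS] by blast
  have i3: "\<phi> e \<in> op' (\<phi> z) (\<phi> z')" using inv(3) tr_key[OF xyz(3) xyz(5) eS] by blast
  have i4: "\<phi> e \<in> op' (\<phi> z') (\<phi> z)" using inv(4) tr_key[OF xyz(5) xyz(3) eS] by blast
  have "\<phi> x \<in> op' (\<phi> y) (\<phi> z)" using xin tr_key[OF xyz(2,3,1)] by blast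
  hence "\<phi> y \<in> op' (\<phi> x) (\<phi> z') \<and> \<phi> z \<in> op' (\<phi> y') (\<phi> x)"
    by (intro tr_hg5[OF e' tr_inS[OF xyz(1)] tr_inS[OF xyz(2)] tr_inS[OF xyz(3)] tr_inS[OF xyz(4)] tr_inS[OF xyz(5)] i1 i2 i3 i4])
  thus ?thesis using tr_key[OF xyz(1,5,2)] tr_key[OF xyz(4,1,3)] by blast
qed

lemma tr_hypergroup: "hypergroup S op"
  unfolding hypergroup_def
proof (intro conjI ballI allI impI)
  fix x y assume "x \<in> S" "y \<in> S" thus "op x y \<subseteq> S" by (rule cl)
next
  fix x y z assume "x \<in> S" "y \<in> S" "z \<in> S"
  thus "(\<Union>w\<in>op x y. op w z) = (\<Union>w\<in>op y z. op x w)" by (rule tr_assoc)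
next
  show "\<exists>!e. hyp_identity S op e" by (rule tr_ex1_ident)
next
  fix e x assume "hyp_identity S op e" "x \<in> S"
  thus "\<exists>!x'. x' \<in> S \<and> e \<in> op x x' \<and> e \<in> op x' x" by (rule tr_inv)
next
  fix e x y z y' z' assume "hyp_identity S op e" "x \<in> S" "y \<in> S" "z \<in> S" "y' \<in> S" "z' \<in> S"
    and "e \<in> op y y' \<and> e \<in> op y' y \<and> e \<in> op z z' \<and> e \<in> op z' z" "x \<in> op y z"
  hence "y \<in> op x z' \<and> z \<in> op y' x" using tr_rev by blast
  thus "y \<in> op x z'" "z \<in> op y' x" by auto
qed

end


theorem proposition5p28:
  shows "(\<forall>f\<in>Hset. \<forall>g\<in>Hset. berk_op f g \<subseteq> Hset)
       \<and> hypergroup Hset berk_op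
       \<and> hypergroup_iso Hset berk_op trop_neg trop_add (\<lambda>h. h [:0, 1:])"
proof -
  have cl: "\<forall>f\<in>Hset. \<forall>g\<in>Hset. berk_op f g \<subseteq> Hset" using berk_closed by blast
  have iso: "hypergroup_iso Hset berk_op trop_neg trop_add (\<lambda>h. h [:0, 1:])"
    unfolding hypergroup_iso_def using phi_bij berk_image by blast
  have hg: "hypergroup Hset berk_op"
  proof (rule tr_hypergroup[OF trop_hypergroup phi_bij])
    show "\<And>x y. x \<in> Hset \<Longrightarrow> y \<in> Hset \<Longrightarrow> berk_op x y \<subseteq> Hset" using berk_closed by blast
    show "\<And>x y. x \<in> Hset \<Longrightarrow> y \<in> Hset \<Longrightarrow> (\<lambda>h. h [:0, 1:]) ` berk_op x y = trop_add (x [:0, 1:]) (y [:0, 1:])"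
      by (rule berk_image)
  qed
  show ?thesis using cl hg iso by blast
qed

end
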